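(* Let $M$ be a matroid, let $S,T$ be disjoint subsets of $E(M)$, let $k:=\kappa_M(S,T)$, and let $F\subseteq E(M)-(S\cup T)$ be a set of elements none of which is flexible with respect to $(S,T)$. Let $t:=|F|$. Then there exist an ordering $(f_1,\dots,f_t)$ of $F$ and a sequence $(A_1,\dots,A_t)$ of subsets of $E(M)$ such that: (1) for each $i\in\{1,\dots,t\}$, $S\subseteq A_i\subseteq E(M)-T$ and $\lambda_M(A_i)=k$; (2) $A_i\subseteq A_{i+1}$ for each $i\in\{1,\dots,t-1\}$; (3) $A_i\cap F=\{f_1,\dots,f_i\}$ for each $i\in\{1,\dots,t\}$; (4) for each $i$, $f_i\in \mathrm{cl}_M(A_i-f_i)\cap\mathrm{cl}_M(E(M)-A_i)$ or $f_i\in\mathrm{cl}^*_M(A_i-f_i)\cap\mathrm{cl}^*_M(E(M)-A_i)$.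
   Context: For a matroid $M$ with ground set $E$, $\lambda_M(X):=r_M(X)+r_M(E-X)-r(M)$, and for disjoint $S,T\subseteq E$, $\kappa_M(S,T):=\min\{\lambda_M(X):S\subseteq X\subseteq E-T\}$. $\mathrm{cl}_M$ is the closure operator and $\mathrm{cl}^*_M$ the closure operator of the dual matroid $M^*$. For $e\in E-(S\cup T)$: $e$ is deletable with respect to $(S,T)$ if $\kappa_{M\setminus e}(S,T)=\kappa_M(S,T)$; contractible with respect to $(S,T)$ if $\kappa_{M/e}(S,T)=\kappa_M(S,T)$; flexible with respect to $(S,T)$ if it is both deletable and contractible. *)

theory Defs
  imports Main
begin

text \<open>A (finite) matroid is given by its ground set E and its rank function r,
  satisfying the standard rank axioms on subsets of E. Values of r outside
  Pow E are irrelevant.\<close>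

definition matroid :: "'a set \<Rightarrow> ('a set \<Rightarrow> nat) \<Rightarrow> bool" where
  "matroid E r \<longleftrightarrow> finite E
     \<and> (\<forall>X. X \<subseteq> E \<longrightarrow> r X \<le> card X)
     \<and> (\<forall>X Y. X \<subseteq> Y \<and> Y \<subseteq> E \<longrightarrow> r X \<le> r Y)
     \<and> (\<forall>X Y. X \<subseteq> E \<and> Y \<subseteq> E \<longrightarrow> r (X \<union> Y) + r (X \<inter> Y) \<le> r X + r Y)"

definition conn :: "'a set \<Rightarrow> ('a set \<Rightarrow> nat) \<Rightarrow> 'a set \<Rightarrow> nat" where
  "conn E r X = r X + r (E - X) - r E"

definition kappa :: "'a set \<Rightarrow> ('a set \<Rightarrow> nat) \<Rightarrow> 'a set \<Rightarrow> 'a set \<Rightarrow> nat" where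
  "kappa E r S T = Min {conn E r X | X. S \<subseteq> X \<and> X \<subseteq> E - T}"

text \<open>Deletion M\e has ground set E - {e} and the same rank function;
  contraction M/e has ground set E - {e} and rank X \<mapsto> r(X \<union> {e}) - r({e}).\<close>
definition contract_rank :: "('a set \<Rightarrow> nat) \<Rightarrow> 'a \<Rightarrow> 'a set \<Rightarrow> nat" where
  "contract_rank r e X = r (X \<union> {e}) - r {e}"

definition dual_rank :: "'a set \<Rightarrow> ('a set \<Rightarrow> nat) \<Rightarrow> 'a set \<Rightarrow> nat" where
  "dual_rank E r X = card X + r (E - X) - r E"

definition cl :: "'a set \<Rightarrow> ('a set \<Rightarrow> nat) \<Rightarrow> 'a set \<Rightarrow> 'a set" where
  "cl E r X = {x \<in> E. r (insert x X) = r X}"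

definition cl_dual :: "'a set \<Rightarrow> ('a set \<Rightarrow> nat) \<Rightarrow> 'a set \<Rightarrow> 'a set" where
  "cl_dual E r X = cl E (dual_rank E r) X"

definition deletable :: "'a set \<Rightarrow> ('a set \<Rightarrow> nat) \<Rightarrow> 'a set \<Rightarrow> 'a set \<Rightarrow> 'a \<Rightarrow> bool" where
  "deletable E r S T e \<longleftrightarrow> kappa (E - {e}) r S T = kappa E r S T"

definition contractible :: "'a set \<Rightarrow> ('a set \<Rightarrow> nat) \<Rightarrow> 'a set \<Rightarrow> 'a set \<Rightarrow> 'a \<Rightarrow> bool" where
  "contractible E r S T e \<longleftrightarrow> kappa (E - {e}) (contract_rank r e) S T = kappa E r S T"

definition flexible :: "'a set \<Rightarrow> ('a set \<Rightarrow> nat) \<Rightarrow> 'a set \<Rightarrow> 'a set \<Rightarrow> 'a \<Rightarrow> bool" where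
  "flexible E r S T e \<longleftrightarrow> deletable E r S T e \<and> contractible E r S T e"

end

theory Submission
  imports Defs
begin

lemma kappa_le:
  assumes "finite E" "S \<subseteq> X" "X \<subseteq> E - T"
  shows "kappa E r S T \<le> conn E r X"
proof -
  have "finite {X. S \<subseteq> X \<and> X \<subseteq> E - T}"
    by (rule finite_subset[of _ "Pow E"]) (use assms in auto)
  then have "finite {conn E r X |X. S \<subseteq> X \<and> X \<subseteq> E - T}" by (rule finite_image_set)
  then show ?thesis unfolding kappa_def using assms by (intro Min_le) auto
qed

lemma kappa_ex:
  assumes "finite E" "S \<subseteq> E - T"
  shows "\<exists>X. S \<subseteq> X \<and> X \<subseteq> E - T \<and> conn E r X = kappa E r S T"
proof -
  have "finite {X. S \<subseteq> X \<and> X \<subseteq> E - T}"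
    by (rule finite_subset[of _ "Pow E"]) (use assms in auto)
  then have "finite {conn E r X |X. S \<subseteq> X \<and> X \<subseteq> E - T}" by (rule finite_image_set)
  moreover have "{conn E r X |X. S \<subseteq> X \<and> X \<subseteq> E - T} \<noteq> {}" using assms by auto
  ultimately have "kappa E r S T \<in> {conn E r X |X. S \<subseteq> X \<and> X \<subseteq> E - T}"
    unfolding kappa_def by (rule Min_in)
  then show ?thesis unfolding mem_Collect_eq by metis
qed

locale mat =
  fixes E :: "'a set" and r :: "'a set \<Rightarrow> nat"
  assumes m: "matroid E r"
begin

lemma finE: "finite E" using m unfolding matroid_def by blast
lemma rcard: "X \<subseteq> E \<Longrightarrow> r X \<le> card X" using m unfolding matroid_def by blast
lemma rmono: "X \<subseteq> Y \<Longrightarrow> Y \<subseteq> E \<Longrightarrow> r X \<le> r Y" using m unfolding matroid_def by blast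
lemma rsub: "X \<subseteq> E \<Longrightarrow> Y \<subseteq> E \<Longrightarrow> r (X \<union> Y) + r (X \<inter> Y) \<le> r X + r Y"
  using m unfolding matroid_def by blast

lemma r_single: "f \<in> E \<Longrightarrow> r {f} \<le> 1" using rcard[of "{f}"] by simp

lemma r_un_single: "W \<subseteq> E \<Longrightarrow> f \<in> E \<Longrightarrow> r (insert f W) \<le> r W + r {f}"
  using rsub[of W "{f}"] by simp

lemma r_ins: "W \<subseteq> E \<Longrightarrow> f \<in> E \<Longrightarrow> r (insert f W) \<le> r W + 1"
proof -
  assume a: "W \<subseteq> E" "f \<in> E"
  have "r (insert f W) \<le> r W + r {f}" using r_un_single[OF a] by blast
  moreover have "r {f} \<le> 1" using r_single[OF a(2)] by blast
  ultimately show ?thesis by linarith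
qed

lemma r_compl: assumes "X \<subseteq> E" shows "r E \<le> r X + r (E - X)"
proof -
  have "X \<union> (E - X) = E" using assms by blast
  moreover have "X \<inter> (E - X) = {}" by blast
  ultimately show ?thesis using rsub[of X "E - X"] assms by simp
qed

lemma conn_int: assumes "X \<subseteq> E"
  shows "int (conn E r X) = int (r X) + int (r (E - X)) - int (r E)"
proof -
  have "r E \<le> r X + r (E - X)" using r_compl[OF assms] .
  then show ?thesis unfolding conn_def by linarith
qed

lemma r_empty: "r {} = 0" using rcard[of "{}"] by simp

lemma conn_gen: assumes "X \<subseteq> W" "W \<subseteq> E"
  shows "int (conn W r X) = int (r X) + int (r (W - X)) - int (r W)"
proof -
  have "X \<union> (W - X) = W" "X \<inter> (W - X) = {}" using assms by auto
  then have "r W \<le> r X + r (W - X)" using rsub[of X "W - X"] assms r_empty by auto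
  then show ?thesis unfolding conn_def by linarith
qed

lemma conn_con: assumes "X \<subseteq> E - {f}" "f \<in> E"
  shows "int (conn (E - {f}) (contract_rank r f) X)
     = int (r (insert f X)) + int (r (insert f (E - {f} - X))) - int (r E) - int (r {f})"
proof -
  have u: "insert f X \<union> insert f (E - {f} - X) = E" "insert f X \<inter> insert f (E - {f} - X) = {f}"
    using assms by auto
  have "r E + r {f} \<le> r (insert f X) + r (insert f (E - {f} - X))"
    using rsub[of "insert f X" "insert f (E - {f} - X)"] assms unfolding u by auto
  moreover have "r {f} \<le> r (insert f X)" using rmono[of "{f}" "insert f X"] assms by auto
  moreover have "r {f} \<le> r (insert f (E - {f} - X))" using rmono[of "{f}" "insert f (E - {f} - X)"] assms by auto
  moreover have "r {f} \<le> r E" using rmono[of "{f}" E] assms by auto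
  moreover have "E - {f} \<union> {f} = E" using assms by auto
  ultimately show ?thesis unfolding conn_def contract_rank_def by simp
qed

lemma conn_submod:
  assumes "A \<subseteq> E" "B \<subseteq> E"
  shows "conn E r (A \<union> B) + conn E r (A \<inter> B) \<le> conn E r A + conn E r B"
proof -
  have e1: "E - (A \<union> B) = (E - A) \<inter> (E - B)" by blast
  have e2: "E - (A \<inter> B) = (E - A) \<union> (E - B)" by blast
  have h1: "r (A \<union> B) + r (A \<inter> B) \<le> r A + r B" using rsub[of A B] assms by blast
  have h2: "r ((E - A) \<union> (E - B)) + r ((E - A) \<inter> (E - B)) \<le> r (E - A) + r (E - B)"
    using rsub[of "E - A" "E - B"] by blast
  have q1: "int (conn E r (A \<union> B)) = int (r (A \<union> B)) + int (r ((E - A) \<inter> (E - B))) - int (r E)"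
    using assms e1 conn_int[of "A \<union> B"] by simp
  have q2: "int (conn E r (A \<inter> B)) = int (r (A \<inter> B)) + int (r ((E - A) \<union> (E - B))) - int (r E)"
    using assms e2 conn_int[of "A \<inter> B"] by auto
  have q3: "int (conn E r A) = int (r A) + int (r (E - A)) - int (r E)"
    using assms by (intro conn_int) auto
  have q4: "int (conn E r B) = int (r B) + int (r (E - B)) - int (r E)"
    using assms by (intro conn_int) auto
  have "int (conn E r (A \<union> B)) + int (conn E r (A \<inter> B)) \<le> int (conn E r A) + int (conn E r B)"
    unfolding q1 q2 q3 q4 using h1 h2 by linarith
  then show ?thesis by linarith
qed

lemma cl_lemma:
  assumes "f \<in> A" "A \<subseteq> E" "conn E r (A - {f}) = conn E r A"
  shows "f \<in> cl E r (A - {f}) \<inter> cl E r (E - A)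
       \<or> f \<in> cl_dual E r (A - {f}) \<inter> cl_dual E r (E - A)"
proof -
  define X where "X = A - {f}"
  define Y where "Y = E - A"
  have fE: "f \<in> E" using assms by blast
  have s1: "E - X = insert f Y" using assms unfolding X_def Y_def by blast
  have s2: "insert f X = A" using assms unfolding X_def by blast
  have s3: "E - insert f Y = X" using assms unfolding X_def Y_def by blast
  have s4: "E - Y = A" using assms unfolding Y_def by blast
  have XE: "X \<subseteq> E" and YE: "Y \<subseteq> E" using assms unfolding X_def Y_def by auto
  have fX: "f \<notin> X" and fY: "f \<notin> Y" using assms unfolding X_def Y_def by auto
  have fin: "finite X" "finite Y" using XE YE finE finite_subset by auto
  have c1: "r E \<le> r X + r (insert f Y)" using r_compl[OF XE] s1 by simp
  have c2: "r E \<le> r A + r Y" using r_compl[OF YE] s4 by simp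
  have eq: "r X + r (insert f Y) = r A + r Y"
    using assms(3) c1 c2 s1 unfolding conn_def X_def[symmetric] Y_def[symmetric] by simp
  have a1: "r X \<le> r A" "r A \<le> r X + 1" using rmono[of X A] r_ins[OF XE fE] s2 assms XE by auto
  have a2: "r Y \<le> r (insert f Y)" "r (insert f Y) \<le> r Y + 1" using rmono[of Y "insert f Y"] r_ins[OF YE fE] YE fE by auto
  show ?thesis
  proof (cases "r A = r X")
    case True
    then have "r (insert f Y) = r Y" using eq by simp
    then show ?thesis using True fE s2 unfolding cl_def X_def[symmetric] Y_def[symmetric] by auto
  next
    case False
    then have h1: "r A = r X + 1" and h2: "r (insert f Y) = r Y + 1" using a1 a2 eq by auto
    have cA: "card A = card X + 1" using s2 fin fX card_insert_disjoint by fastforce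
    have "dual_rank E r (insert f X) = dual_rank E r X"
      unfolding dual_rank_def using s1 s2 s4 h1 h2 fin fX Y_def cA by simp
    moreover have "dual_rank E r (insert f Y) = dual_rank E r Y"
      unfolding dual_rank_def using s3 s4 h1 h2 fin fY by simp
    ultimately show ?thesis using fE unfolding cl_dual_def cl_def X_def[symmetric] Y_def[symmetric] by auto
  qed
qed

end

locale mat2 = mat +
  fixes S T :: "'a set"
  assumes SE: "S \<subseteq> E" and TE: "T \<subseteq> E" and ST: "S \<inter> T = {}"
begin

definition K where "K Z \<longleftrightarrow> S \<subseteq> Z \<and> Z \<subseteq> E - T \<and> conn E r Z = kappa E r S T"

lemma K_ge: "S \<subseteq> Z \<Longrightarrow> Z \<subseteq> E - T \<Longrightarrow> kappa E r S T \<le> conn E r Z"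
  using kappa_le[OF finE] by blast

lemma K_un_int: assumes "K A" "K B" shows "K (A \<union> B)" "K (A \<inter> B)"
proof -
  have s: "A \<subseteq> E" "B \<subseteq> E" using assms unfolding K_def by auto
  have "kappa E r S T \<le> conn E r (A \<union> B)" "kappa E r S T \<le> conn E r (A \<inter> B)"
    using assms unfolding K_def by (auto intro!: K_ge)
  then show "K (A \<union> B)" "K (A \<inter> B)" using conn_submod[OF s] assms unfolding K_def by auto
qed

lemma K_Union: "finite \<A> \<Longrightarrow> \<A> \<noteq> {} \<Longrightarrow> \<forall>Z\<in>\<A>. K Z \<Longrightarrow> K (\<Union>\<A>)"
  by (induction \<A> rule: finite_ne_induct) (auto intro: K_un_int)

lemma K_Inter: "finite \<A> \<Longrightarrow> \<A> \<noteq> {} \<Longrightarrow> \<forall>Z\<in>\<A>. K Z \<Longrightarrow> K (\<Inter>\<A>)"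
  by (induction \<A> rule: finite_ne_induct) (auto intro: K_un_int)

lemma nonflex:
  assumes fF: "f \<in> E - (S \<union> T)" and nf: "\<not> flexible E r S T f"
  shows "\<exists>X. K X \<and> f \<notin> X \<and> K (insert f X)"
proof -
  define k where "k = kappa E r S T"
  have fE: "f \<in> E" using fF by blast
  obtain Z where Z: "S \<subseteq> Z" "Z \<subseteq> E - T" "conn E r Z = k"
    using kappa_ex[OF finE, of S T r] SE ST unfolding k_def by blast
  have ZE: "Z \<subseteq> E" using Z by blast
  have fin': "finite (E - {f})" using finE by blast
  have cZ: "int (conn E r Z) = int (r Z) + int (r (E - Z)) - int (r E)" using conn_int[OF ZE] by blast
  show ?thesis
  proof (cases "deletable E r S T f")
    case False
    have le: "kappa (E - {f}) r S T \<le> k"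
    proof -
      have "kappa (E - {f}) r S T \<le> conn (E - {f}) r (Z - {f})"
        by (rule kappa_le[OF fin']) (use Z fF in auto)
      also have "\<dots> \<le> conn E r Z"
      proof -
        have cZ': "int (conn (E - {f}) r (Z - {f})) = int (r (Z - {f})) + int (r (E - {f} - (Z - {f}))) - int (r (E - {f}))"
          by (rule conn_gen) (use ZE in auto)
        show ?thesis
        proof (cases "f \<in> Z")
          case True
          have e1: "E - {f} - (Z - {f}) = E - Z" using True by blast
          have "r (Z \<union> (E - {f})) + r (Z \<inter> (E - {f})) \<le> r Z + r (E - {f})"
            using rsub[of Z "E - {f}"] ZE by blast
          moreover have "Z \<union> (E - {f}) = E" "Z \<inter> (E - {f}) = Z - {f}" using True ZE by auto
          ultimately have "r E + r (Z - {f}) \<le> r Z + r (E - {f})" by simp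
          then have "int (conn (E - {f}) r (Z - {f})) \<le> int (conn E r Z)"
            unfolding cZ cZ' e1 by linarith
          then show ?thesis by linarith
        next
          case False
          have e1: "E - {f} - (Z - {f}) = (E - Z) - {f}" "Z - {f} = Z" "E - {f} - Z = E - Z - {f}" using False by auto
          have "r ((E - Z) \<union> (E - {f})) + r ((E - Z) \<inter> (E - {f})) \<le> r (E - Z) + r (E - {f})"
            using rsub[of "E - Z" "E - {f}"] by blast
          moreover have "(E - Z) \<union> (E - {f}) = E" "(E - Z) \<inter> (E - {f}) = E - Z - {f}" using False fE by auto
          ultimately have "r E + r (E - Z - {f}) \<le> r (E - Z) + r (E - {f})" by simp
          then have "int (conn (E - {f}) r (Z - {f})) \<le> int (conn E r Z)"
            using cZ cZ' unfolding e1 by linarith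
          then show ?thesis by linarith
        qed
      qed
      finally show ?thesis using Z by simp
    qed
    have "kappa (E - {f}) r S T \<noteq> k" using False unfolding deletable_def k_def .
    with le have lt: "kappa (E - {f}) r S T < k" by simp
    obtain X where X: "S \<subseteq> X" "X \<subseteq> E - {f} - T" "conn (E - {f}) r X = kappa (E - {f}) r S T"
      using kappa_ex[OF fin', of S T r] SE ST fF by blast
    define Y where "Y = E - {f} - X"
    have XE: "X \<subseteq> E" and YE: "Y \<subseteq> E" and fX: "f \<notin> X" using X unfolding Y_def by auto
    have e1: "E - X = insert f Y" "E - insert f X = Y" using X fE unfolding Y_def by auto
    have k1: "k \<le> conn E r X" unfolding k_def by (rule K_ge) (use X in auto)
    have k2: "k \<le> conn E r (insert f X)" unfolding k_def by (rule K_ge) (use X fF in auto)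
    have i1: "r (insert f Y) \<le> r Y + 1" "r (insert f X) \<le> r X + 1"
      using r_ins[OF YE fE] r_ins[OF XE fE] by auto
    have i2: "r (E - {f}) \<le> r E" using rmono[of "E - {f}" E] by blast
    have q0: "int (conn (E - {f}) r X) = int (r X) + int (r Y) - int (r (E - {f}))"
      unfolding Y_def by (rule conn_gen) (use X in auto)
    have q1: "int (conn E r X) = int (r X) + int (r (insert f Y)) - int (r E)"
      using conn_int[OF XE] e1 by simp
    have q2: "int (conn E r (insert f X)) = int (r (insert f X)) + int (r Y) - int (r E)"
      using conn_int[of "insert f X"] XE fE e1 by simp
    have lt': "int (conn (E - {f}) r X) < int k" using lt X(3) by simp
    have A: "int (conn E r X) \<le> int k" "int (conn E r (insert f X)) \<le> int k"
      using q0 q1 q2 lt' i1 i2 by linarith+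
    show ?thesis using A k1 k2 X fF unfolding K_def k_def by auto
  next
    case True
    then have False': "\<not> contractible E r S T f" using nf unfolding flexible_def by blast
    let ?c = "contract_rank r f"
    have rf: "r {f} \<le> 1" using r_single[OF fE] by blast
    have le: "kappa (E - {f}) ?c S T \<le> k"
    proof -
      have "kappa (E - {f}) ?c S T \<le> conn (E - {f}) ?c (Z - {f})"
        by (rule kappa_le[OF fin']) (use Z fF in auto)
      also have "\<dots> \<le> conn E r Z"
      proof -
        have cZ': "int (conn (E - {f}) ?c (Z - {f})) = int (r (insert f (Z - {f}))) + int (r (insert f (E - {f} - (Z - {f})))) - int (r E) - int (r {f})"
          by (rule conn_con) (use ZE fE in auto)
        show ?thesis
        proof (cases "f \<in> Z")
          case True
          have e1: "insert f (E - {f} - (Z - {f})) = insert f (E - Z)" "insert f (Z - {f}) = Z" using True ZE by auto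
          have "r (insert f (E - Z)) \<le> r (E - Z) + r {f}" using r_un_single[of "E - Z" f] fE by blast
          then have "int (conn (E - {f}) ?c (Z - {f})) \<le> int (conn E r Z)"
            unfolding cZ cZ' e1 by linarith
          then show ?thesis by linarith
        next
          case False
          have e1: "insert f (E - {f} - (Z - {f})) = E - Z" "insert f (Z - {f}) = insert f Z" using False fE by auto
          have "r (insert f Z) \<le> r Z + r {f}" using r_un_single[OF ZE fE] by blast
          then have "int (conn (E - {f}) ?c (Z - {f})) \<le> int (conn E r Z)"
            unfolding cZ cZ' e1 by linarith
          then show ?thesis by linarith
        qed
      qed
      finally show ?thesis using Z by simp
    qed
    have "kappa (E - {f}) ?c S T \<noteq> k" using False' unfolding contractible_def k_def .
    with le have lt: "kappa (E - {f}) ?c S T < k" by simp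
    obtain X where X: "S \<subseteq> X" "X \<subseteq> E - {f} - T" "conn (E - {f}) ?c X = kappa (E - {f}) ?c S T"
      using kappa_ex[OF fin', of S T ?c] SE ST fF by blast
    define Y where "Y = E - {f} - X"
    have XE: "X \<subseteq> E" and YE: "Y \<subseteq> E" and fX: "f \<notin> X" using X unfolding Y_def by auto
    have e1: "E - X = insert f Y" "E - insert f X = Y" using X fE unfolding Y_def by auto
    have k1: "k \<le> conn E r X" unfolding k_def by (rule K_ge) (use X in auto)
    have k2: "k \<le> conn E r (insert f X)" unfolding k_def by (rule K_ge) (use X fF in auto)
    have i1: "r (insert f Y) \<le> r Y + 1" "r (insert f X) \<le> r X + 1"
      using r_ins[OF YE fE] r_ins[OF XE fE] by auto
    have i3: "r Y \<le> r (insert f Y)" "r X \<le> r (insert f X)" using rmono[of Y "insert f Y"] rmono[of X "insert f X"] XE YE fE by auto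
    have q0: "int (conn (E - {f}) ?c X) = int (r (insert f X)) + int (r (insert f Y)) - int (r E) - int (r {f})"
      unfolding Y_def by (rule conn_con) (use X fE in auto)
    have q1: "int (conn E r X) = int (r X) + int (r (insert f Y)) - int (r E)"
      using conn_int[OF XE] e1 by simp
    have q2: "int (conn E r (insert f X)) = int (r (insert f X)) + int (r Y) - int (r E)"
      using conn_int[of "insert f X"] XE fE e1 by simp
    have lt': "int (conn (E - {f}) ?c X) < int k" using lt X(3) by simp
    have A: "int (conn E r X) \<le> int k" "int (conn E r (insert f X)) \<le> int k"
      using q0 q1 q2 lt' i1 i3 rf by linarith+
    show ?thesis using A k1 k2 X fF unfolding K_def k_def by auto
  qed
qed

end

lemma set_take_iff: "x \<in> set (take n xs) \<longleftrightarrow> (\<exists>j. j < n \<and> j < length xs \<and> xs ! j = x)"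
  by (auto simp: in_set_conv_nth)

context mat2
begin

definition P where "P f = \<Inter>{Z. K Z \<and> f \<in> Z}"

lemma famfin: "finite {Z. K Z \<and> f \<in> Z}"
  by (rule finite_subset[of _ "Pow E"]) (use finE in \<open>auto simp: K_def\<close>)

lemma f_P: "f \<in> P f" unfolding P_def by blast

lemma P_min: "K Z \<Longrightarrow> f \<in> Z \<Longrightarrow> P f \<subseteq> Z" unfolding P_def by blast

context
  fixes f assumes fF: "f \<in> E - (S \<union> T)" and nf: "\<not> flexible E r S T f"
begin

lemma wit: obtains X where "K X" "f \<notin> X" "K (insert f X)"
  using nonflex[OF fF nf] by blast

lemma P_K: "K (P f)"
proof -
  obtain X where "K X" "f \<notin> X" "K (insert f X)" using wit .
  then have "{Z. K Z \<and> f \<in> Z} \<noteq> {}" by blast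
  then show ?thesis unfolding P_def using K_Inter[OF famfin] by blast
qed


lemma P_minus: "K (P f - {f})"
proof -
  obtain X where X: "K X" "f \<notin> X" "K (insert f X)" using wit .
  have "P f \<subseteq> insert f X" using P_min[OF X(3)] by blast
  then have "P f - {f} = P f \<inter> X" using X by blast
  then show ?thesis using K_un_int(2)[OF P_K X(1)] by simp
qed

end

lemma card_lt:
  assumes f: "f \<in> E - (S \<union> T)" "\<not> flexible E r S T f"
    and g: "g \<in> E - (S \<union> T)" "\<not> flexible E r S T g"
    and gf: "g \<in> P f" "g \<noteq> f"
  shows "card (P g) < card (P f)"
proof -
  have "P g \<subseteq> P f - {f}" using P_min[OF P_minus[OF f], of g] gf by blast
  then have "P g \<subset> P f" using f_P[of f] by blast
  moreover have "finite (P f)" using P_K[OF f] finE finite_subset unfolding K_def by blast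
  ultimately show ?thesis by (rule psubset_card_mono[rotated])
qed

lemma main:
  assumes FE: "F \<subseteq> E - (S \<union> T)" and nfl: "\<forall>e\<in>F. \<not> flexible E r S T e"
  shows "\<exists>fs As. distinct fs \<and> set fs = F \<and> length As = length fs
    \<and> (\<forall>i < length fs. S \<subseteq> As ! i \<and> As ! i \<subseteq> E - T
                         \<and> conn E r (As ! i) = kappa E r S T)
    \<and> (\<forall>i. i + 1 < length fs \<longrightarrow> As ! i \<subseteq> As ! (i + 1))
    \<and> (\<forall>i < length fs. As ! i \<inter> F = set (take (i + 1) fs))
    \<and> (\<forall>i < length fs.
         fs ! i \<in> cl E r (As ! i - {fs ! i}) \<inter> cl E r (E - As ! i)
       \<or> fs ! i \<in> cl_dual E r (As ! i - {fs ! i}) \<inter> cl_dual E r (E - As ! i))"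
proof -
  have "finite F" using FE finE finite_subset by blast
  then obtain xs where xs: "distinct xs" "set xs = F" using finite_distinct_list by blast
  define fs where "fs = sort_key (\<lambda>f. card (P f)) xs"
  have dfs: "distinct fs" and sfs: "set fs = F" unfolding fs_def using xs by auto
  have srt: "sorted (map (\<lambda>f. card (P f)) fs)" unfolding fs_def by simp
  have inF: "\<And>i. i < length fs \<Longrightarrow> fs ! i \<in> F" using sfs by auto
  have good: "\<And>i. i < length fs \<Longrightarrow> fs ! i \<in> E - (S \<union> T) \<and> \<not> flexible E r S T (fs ! i)"
    using inF FE nfl by blast
  have idx: "i \<le> j" if ij: "i < length fs" "j < length fs" "fs ! i \<in> P (fs ! j)" for i j
  proof (rule ccontr)
    assume "\<not> i \<le> j"
    then have "j \<le> i" by simp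
    then have "card (P (fs ! j)) \<le> card (P (fs ! i))"
      using sorted_nth_mono[OF srt, of j i] ij by simp
    moreover have "fs ! i \<noteq> fs ! j" using dfs ij \<open>\<not> i \<le> j\<close> nth_eq_iff_index_eq by fastforce
    moreover have "card (P (fs ! i)) < card (P (fs ! j))"
      using card_lt[OF conjunct1[OF good[OF ij(2)]] conjunct2[OF good[OF ij(2)]] conjunct1[OF good[OF ij(1)]] conjunct2[OF good[OF ij(1)]] ij(3)] calculation(2) by blast
    ultimately show False by linarith
  qed
  define B where "B i = \<Union>(P ` set (take (Suc i) fs))" for i
  define As where "As = map B [0..<length fs]"
  have AsB: "\<And>i. i < length fs \<Longrightarrow> As ! i = B i" unfolding As_def by simp
  have KP: "K (P x)" if "x \<in> set fs" for x
    using that FE nfl sfs by (intro P_K) auto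
  have KB: "K (B i)" if "i < length fs" for i
    unfolding B_def
  proof (rule K_Union)
    show "finite (P ` set (take (Suc i) fs))" by simp
    show "P ` set (take (Suc i) fs) \<noteq> {}" using that by (cases fs) auto
    show "\<forall>Z\<in>P ` set (take (Suc i) fs). K Z" using KP set_take_subset[of "Suc i" fs] by blast
  qed
  have c1: "\<forall>i < length fs. S \<subseteq> As ! i \<and> As ! i \<subseteq> E - T \<and> conn E r (As ! i) = kappa E r S T"
    using KB AsB unfolding K_def by simp
  have c2: "\<forall>i. i + 1 < length fs \<longrightarrow> As ! i \<subseteq> As ! (i + 1)"
  proof (intro allI impI)
    fix i assume "i + 1 < length fs"
    moreover have "set (take (Suc i) fs) \<subseteq> set (take (Suc (Suc i)) fs)"
      by (rule set_take_subset_set_take) simp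
    ultimately show "As ! i \<subseteq> As ! (i + 1)" using AsB unfolding B_def by auto
  qed
  have c3: "\<forall>i < length fs. As ! i \<inter> F = set (take (i + 1) fs)"
  proof (intro allI impI)
    fix i assume i: "i < length fs"
    show "As ! i \<inter> F = set (take (i + 1) fs)"
    proof
      show "As ! i \<inter> F \<subseteq> set (take (i + 1) fs)"
      proof
        fix x assume x: "x \<in> As ! i \<inter> F"
        then obtain y where y: "y \<in> set (take (Suc i) fs)" "x \<in> P y" using AsB i unfolding B_def by auto
        then obtain j where j: "j < Suc i" "j < length fs" "fs ! j = y" unfolding set_take_iff by blast
        obtain m where m: "m < length fs" "fs ! m = x" using x sfs by (metis IntD2 in_set_conv_nth)
        have "m \<le> j" using idx[of m j] m j y by simp
        then have "m < i + 1" "m < length fs" "fs ! m = x" using m j by auto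
        then show "x \<in> set (take (i + 1) fs)" unfolding set_take_iff by blast
      qed
      show "set (take (i + 1) fs) \<subseteq> As ! i \<inter> F"
      proof
        fix x assume x: "x \<in> set (take (i + 1) fs)"
        then have "x \<in> F" using sfs set_take_subset[of "i+1" fs] by fast
        then have "x \<in> P x" using f_P by blast
        then show "x \<in> As ! i \<inter> F" using x \<open>x \<in> F\<close> AsB i unfolding B_def by auto
      qed
    qed
  qed
  have c4: "\<forall>i < length fs.
         fs ! i \<in> cl E r (As ! i - {fs ! i}) \<inter> cl E r (E - As ! i)
       \<or> fs ! i \<in> cl_dual E r (As ! i - {fs ! i}) \<inter> cl_dual E r (E - As ! i)"
  proof (intro allI impI)
    fix i assume i: "i < length fs"
    let ?f = "fs ! i"
    have tk: "take (Suc i) fs = take i fs @ [?f]" by (rule take_Suc_conv_app_nth[OF i])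
    have notin: "?f \<notin> P y" if "y \<in> set (take i fs)" for y
    proof
      assume a: "?f \<in> P y"
      from that obtain j where j: "j < i" "j < length fs" "fs ! j = y" unfolding set_take_iff by blast
      then show False using idx[of i j] a i by simp
    qed
    have eq: "B i - {?f} = \<Union>(insert (P ?f - {?f}) (P ` set (take i fs)))"
      unfolding B_def tk using notin by auto
    have "K (B i - {?f})"
      unfolding eq
    proof (rule K_Union)
      show "finite (insert (P ?f - {?f}) (P ` set (take i fs)))" by simp
      show "insert (P ?f - {?f}) (P ` set (take i fs)) \<noteq> {}" by simp
      show "\<forall>Z\<in>insert (P ?f - {?f}) (P ` set (take i fs)). K Z"
        using KP set_take_subset[of i fs] P_minus[OF conjunct1[OF good[OF i]] conjunct2[OF good[OF i]]] by blast
    qed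
    moreover have "K (B i)" using KB i .
    moreover have "?f \<in> B i" unfolding B_def tk using f_P[of ?f] by simp
    ultimately have "conn E r (B i - {?f}) = conn E r (B i)" "B i \<subseteq> E" "?f \<in> B i"
      unfolding K_def by auto
    then have "?f \<in> cl E r (B i - {?f}) \<inter> cl E r (E - B i)
       \<or> ?f \<in> cl_dual E r (B i - {?f}) \<inter> cl_dual E r (E - B i)"
      by (intro cl_lemma) auto
    then show "?f \<in> cl E r (As ! i - {?f}) \<inter> cl E r (E - As ! i)
       \<or> ?f \<in> cl_dual E r (As ! i - {?f}) \<inter> cl_dual E r (E - As ! i)"
      unfolding AsB[OF i] .
  qed
  have "length As = length fs" unfolding As_def by simp
  then show ?thesis using dfs sfs c1 c2 c3 c4 by blast
qed

end

theorem theorem3p4: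
  fixes E :: "'a set" and r :: "'a set \<Rightarrow> nat" and S T F :: "'a set"
  assumes "matroid E r"
    and "S \<subseteq> E" and "T \<subseteq> E" and "S \<inter> T = {}"
    and "F \<subseteq> E - (S \<union> T)"
    and "\<forall>e\<in>F. \<not> flexible E r S T e"
  shows "\<exists>fs As. distinct fs \<and> set fs = F \<and> length As = length fs
    \<and> (\<forall>i < length fs. S \<subseteq> As ! i \<and> As ! i \<subseteq> E - T
                         \<and> conn E r (As ! i) = kappa E r S T)
    \<and> (\<forall>i. i + 1 < length fs \<longrightarrow> As ! i \<subseteq> As ! (i + 1))
    \<and> (\<forall>i < length fs. As ! i \<inter> F = set (take (i + 1) fs))
    \<and> (\<forall>i < length fs.
         fs ! i \<in> cl E r (As ! i - {fs ! i}) \<inter> cl E r (E - As ! i)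
       \<or> fs ! i \<in> cl_dual E r (As ! i - {fs ! i}) \<inter> cl_dual E r (E - As ! i))"
proof -
  interpret mat2 E r S T using assms by unfold_locales auto
  show ?thesis using main assms(5,6) by blast
qed

end
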